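(* For every prime power $q$, there are no cutting $[7,4]_{q^3/q}$ systems.
   Context: An $[n,k]_{q^m/q}$ system is an $\mathbb F_q$-subspace $U$ of $\mathbb F_{q^m}^k$ with $\dim_{\mathbb F_q}(U)=n$ and $\langle U\rangle_{\mathbb F_{q^m}}=\mathbb F_{q^m}^k$. It is cutting if for every $\mathbb F_{q^m}$-hyperplane $H$ of $\mathbb F_{q^m}^k$ one has $\langle H\cap U\rangle_{\mathbb F_{q^m}}=H$. *)

theory Defs
  imports "HOL-Analysis.Analysis"
begin

definition is_subfield :: "'a::field set \<Rightarrow> bool" where
  "is_subfield K \<longleftrightarrow> 0 \<in> K \<and> 1 \<in> K \<and>
     (\<forall>x\<in>K. \<forall>y\<in>K. x + y \<in> K \<and> x * y \<in> K) \<and>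
     (\<forall>x\<in>K. - x \<in> K) \<and> (\<forall>x\<in>K. x \<noteq> 0 \<longrightarrow> inverse x \<in> K)"

definition span_over :: "'a::field set \<Rightarrow> ('a ^ 'n) set \<Rightarrow> ('a ^ 'n) set" where
  "span_over F S = {x. \<exists>T c. finite T \<and> T \<subseteq> S \<and> (\<forall>v\<in>T. c v \<in> F) \<and>
                          x = (\<Sum>v\<in>T. c v *s v)}"

definition subspace_over :: "'a::field set \<Rightarrow> ('a ^ 'n) set \<Rightarrow> bool" where
  "subspace_over F U \<longleftrightarrow> 0 \<in> U \<and> (\<forall>x\<in>U. \<forall>y\<in>U. x + y \<in> U) \<and>
                        (\<forall>c\<in>F. \<forall>x\<in>U. c *s x \<in> U)"

definition indep_over :: "'a::field set \<Rightarrow> ('a ^ 'n) set \<Rightarrow> bool" where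
  "indep_over F B \<longleftrightarrow> (\<forall>T c. finite T \<and> T \<subseteq> B \<and> (\<forall>v\<in>T. c v \<in> F) \<and>
                          (\<Sum>v\<in>T. c v *s v) = 0 \<longrightarrow> (\<forall>v\<in>T. c v = 0))"

definition subspace_dim_over :: "'a::field set \<Rightarrow> ('a ^ 'n) set \<Rightarrow> nat \<Rightarrow> bool" where
  "subspace_dim_over F U d \<longleftrightarrow> subspace_over F U \<and>
     (\<exists>B. finite B \<and> card B = d \<and> B \<subseteq> U \<and> indep_over F B \<and> span_over F B = U)"

definition hyperplane :: "'a::field ^ 'n \<Rightarrow> ('a ^ 'n) set" where
  "hyperplane a = {x. (\<Sum>i\<in>UNIV. a $ i * x $ i) = 0}"

text \<open>An [n,k]_{q^m/q} system: K-subspace U of L^k (here k = CARD('n)) of K-dimension n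
  whose L-span is all of L^k.\<close>
definition is_system :: "'a::field set \<Rightarrow> ('a ^ 'n) set \<Rightarrow> nat \<Rightarrow> bool" where
  "is_system K U n \<longleftrightarrow> subspace_dim_over K U n \<and> span_over UNIV U = UNIV"

definition cutting :: "('a::field ^ 'n) set \<Rightarrow> bool" where
  "cutting U \<longleftrightarrow> (\<forall>a. a \<noteq> 0 \<longrightarrow> span_over UNIV (hyperplane a \<inter> U) = hyperplane a)"

end

theory Submission
  imports Defs
begin

definition dot :: "'a::field ^ 'n \<Rightarrow> 'a ^ 'n \<Rightarrow> 'a" where
  "dot a x = (\<Sum>i\<in>UNIV. a $ i * x $ i)"

lemma hyperplane_dot: "hyperplane a = {x. dot a x = 0}"
  by (simp add: hyperplane_def dot_def)

lemma dot_add_right: "dot a (x + y) = dot a x + dot a y"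
  by (simp add: dot_def distrib_left sum.distrib)
lemma dot_add_left: "dot (a + b) x = dot a x + dot b x"
  by (simp add: dot_def distrib_right sum.distrib)
lemma dot_smult_right: "dot a (c *s x) = c * dot a x"
  by (simp add: dot_def sum_distrib_left algebra_simps)
lemma dot_smult_left: "dot (c *s a) x = c * dot a x"
  by (simp add: dot_def sum_distrib_left algebra_simps)
lemma dot_diff_right: "dot a (x - y) = dot a x - dot a y"
  by (simp add: dot_def algebra_simps sum_subtractf)
lemma dot_diff_left: "dot (a - b) x = dot a x - dot b x"
  by (simp add: dot_def algebra_simps sum_subtractf)
lemma dot_zero_right[simp]: "dot a 0 = 0" by (simp add: dot_def)

lemma fib:
  fixes \<phi> :: "'b \<Rightarrow> 'c" and d :: "'b \<Rightarrow> 'b \<Rightarrow> 'e"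
  assumes "finite G" "finite Y" "\<phi> ` G \<subseteq> Y" "finite Z"
    and "\<And>x y. x \<in> G \<Longrightarrow> y \<in> G \<Longrightarrow> \<phi> x = \<phi> y \<Longrightarrow> d x y \<in> Z"
    and "\<And>x y s. x \<in> G \<Longrightarrow> y \<in> G \<Longrightarrow> s \<in> G \<Longrightarrow> d x s = d y s \<Longrightarrow> x = y"
  shows "card G \<le> card Y * card Z"
proof -
  define \<sigma> where "\<sigma> z = (SOME x. x \<in> G \<and> \<phi> x = z)" for z
  have s: "\<sigma> (\<phi> x) \<in> G \<and> \<phi> (\<sigma> (\<phi> x)) = \<phi> x" if "x \<in> G" for x
    unfolding \<sigma>_def by (rule someI[of _ x]) (use that in auto)
  define h where "h x = (\<phi> x, d x (\<sigma> (\<phi> x)))" for x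
  have inj: "inj_on h G"
  proof (rule inj_onI)
    fix x y assume xy: "x \<in> G" "y \<in> G" "h x = h y"
    then have "\<phi> x = \<phi> y" "d x (\<sigma> (\<phi> x)) = d y (\<sigma> (\<phi> x))" by (auto simp: h_def)
    then show "x = y" using assms(6)[OF xy(1,2), of "\<sigma> (\<phi> x)"] s[OF xy(1)] by auto
  qed
  have "h ` G \<subseteq> Y \<times> Z"
    using assms(3,5) s unfolding h_def by (auto simp: image_subset_iff)
  then have "card (h ` G) \<le> card (Y \<times> Z)"
    using assms by (intro card_mono) auto
  then show ?thesis using card_image[OF inj] by (simp add: card_cartesian_product)
qed

lemma prop_lemma:
  fixes b c :: "'a::field ^ 'n"
  assumes "c \<noteq> 0" "\<And>z. dot c z = 0 \<Longrightarrow> dot b z = 0"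
  shows "\<exists>\<mu>. b = \<mu> *s c"
proof -
  obtain j where j: "c $ j \<noteq> 0" using assms(1) by (metis vec_eq_iff zero_index)
  have "b $ i = (b $ j / c $ j) * c $ i" for i
  proof (cases "i = j")
    case True then show ?thesis using j by simp
  next
    case False
    define z where "z = (\<chi> k. (if k = i then c $ j else 0) + (if k = j then - c $ i else 0))"
    have e: "dot v z = v $ i * c $ j - v $ j * c $ i" for v
    proof -
      have "dot v z = (\<Sum>k\<in>UNIV. (if k = i then v $ k * c $ j else 0) + (if k = j then - (v $ k * c $ i) else 0))"
        unfolding dot_def z_def by (intro sum.cong) (auto simp: algebra_simps)
      also have "\<dots> = v $ i * c $ j - v $ j * c $ i"
        by (simp add: sum.distrib)
      finally show ?thesis .
    qed
    have "dot c z = 0" using e[of c] by (simp add: mult.commute)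
    then have "dot b z = 0" by (rule assms(2))
    then show ?thesis using e[of b] j by (simp add: field_simps)
  qed
  then have "b = (b $ j / c $ j) *s c"
    unfolding vec_eq_iff vector_smult_component by blast
  then show ?thesis by blast
qed


lemma sf: assumes "is_subfield K"
  shows sf0: "0 \<in> K" and sf1: "1 \<in> K"
    and sfadd: "\<And>x y. x \<in> K \<Longrightarrow> y \<in> K \<Longrightarrow> x + y \<in> K"
    and sfmult: "\<And>x y. x \<in> K \<Longrightarrow> y \<in> K \<Longrightarrow> x * y \<in> K"
    and sfneg: "\<And>x. x \<in> K \<Longrightarrow> - x \<in> K"
    and sfdiff: "\<And>x y. x \<in> K \<Longrightarrow> y \<in> K \<Longrightarrow> x - y \<in> K"
    and sfinv: "\<And>x. x \<in> K \<Longrightarrow> inverse x \<in> K"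
    and sfdiv: "\<And>x y. x \<in> K \<Longrightarrow> y \<in> K \<Longrightarrow> x / y \<in> K"
proof -
  show "0 \<in> K" "1 \<in> K" using assms by (auto simp: is_subfield_def)
  show A: "\<And>x y. x \<in> K \<Longrightarrow> y \<in> K \<Longrightarrow> x + y \<in> K"
    and M: "\<And>x y. x \<in> K \<Longrightarrow> y \<in> K \<Longrightarrow> x * y \<in> K"
    and N: "\<And>x. x \<in> K \<Longrightarrow> - x \<in> K" using assms by (auto simp: is_subfield_def)
  show "\<And>x y. x \<in> K \<Longrightarrow> y \<in> K \<Longrightarrow> x - y \<in> K" by (subst diff_conv_add_uminus, intro A N)
  show I: "\<And>x. x \<in> K \<Longrightarrow> inverse x \<in> K"
  proof -
    fix x assume "x \<in> K" then show "inverse x \<in> K"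
      using assms unfolding is_subfield_def by (cases "x = 0") auto
  qed
  show "\<And>x y. x \<in> K \<Longrightarrow> y \<in> K \<Longrightarrow> x / y \<in> K" using M I by (simp add: divide_inverse)
qed

lemma ss: assumes "is_subfield K" "subspace_over K U"
  shows ss0: "0 \<in> U"
    and ssadd: "\<And>x y. x \<in> U \<Longrightarrow> y \<in> U \<Longrightarrow> x + y \<in> U"
    and sssc: "\<And>c x. c \<in> K \<Longrightarrow> x \<in> U \<Longrightarrow> c *s x \<in> U"
    and ssneg: "\<And>x. x \<in> U \<Longrightarrow> - x \<in> U"
    and ssdiff: "\<And>x y. x \<in> U \<Longrightarrow> y \<in> U \<Longrightarrow> x - y \<in> U"
proof -
  show "0 \<in> U" "\<And>x y. x \<in> U \<Longrightarrow> y \<in> U \<Longrightarrow> x + y \<in> U"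
    and S: "\<And>c x. c \<in> K \<Longrightarrow> x \<in> U \<Longrightarrow> c *s x \<in> U"
    using assms(2) by (auto simp: subspace_over_def)
  show N: "\<And>x. x \<in> U \<Longrightarrow> - x \<in> U"
  proof -
    fix x assume x: "x \<in> U"
    have "- x = (-1) *s x" by (rule vector_sneg_minus1)
    then show "- x \<in> U" using S[OF sfneg[OF assms(1) sf1[OF assms(1)]] x] by simp
  qed
  show "\<And>x y. x \<in> U \<Longrightarrow> y \<in> U \<Longrightarrow> x - y \<in> U"
    using N assms(2) unfolding subspace_over_def by (metis diff_conv_add_uminus)
qed

lemma card_subspace_dim:
  fixes U :: "('a::field ^ 'n) set"
  assumes K: "is_subfield K" and D: "subspace_dim_over K U d"
  shows "card U = card K ^ d"
proof -
  obtain B where B: "finite B" "card B = d" "B \<subseteq> U" "indep_over K B" "span_over K B = U"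
    using D unfolding subspace_dim_over_def by blast
  define f where "f c = (\<Sum>v\<in>B. c v *s v)" for c
  have "bij_betw f (PiE B (\<lambda>_. K)) U"
  proof (rule bij_betwI')
    fix c e assume c: "c \<in> PiE B (\<lambda>_. K)" and e: "e \<in> PiE B (\<lambda>_. K)"
    show "(f c = f e) = (c = e)"
    proof
      assume "f c = f e"
      moreover have "(\<Sum>v\<in>B. (c v - e v) *s v) = f c - f e"
        unfolding f_def by (simp only: vector_sub_rdistrib sum_subtractf)
      ultimately have Z0: "(\<Sum>v\<in>B. (c v - e v) *s v) = 0" by simp
      have Kd: "\<forall>v\<in>B. c v - e v \<in> K" using c e sfdiff[OF K] by auto
      have I: "\<And>T c. finite T \<Longrightarrow> T \<subseteq> B \<Longrightarrow> (\<forall>v\<in>T. c v \<in> K) \<Longrightarrow> (\<Sum>v\<in>T. c v *s v) = 0 \<Longrightarrow> \<forall>v\<in>T. c v = 0"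
        using B(4) unfolding indep_over_def by blast
      have "\<forall>v\<in>B. c v - e v = 0"
        by (rule I[of B "\<lambda>v. c v - e v", OF B(1) order_refl Kd Z0])
      then show "c = e" using c e by (intro PiE_ext[OF c e]) simp
    qed simp
  next
    fix c assume c: "c \<in> PiE B (\<lambda>_. K)"
    have "\<forall>v\<in>B. c v \<in> K" using c by (simp add: PiE_iff)
    then show "f c \<in> U" unfolding f_def B(5)[symmetric] span_over_def
      using B(1) by (intro CollectI exI[of _ B] exI[of _ c]) simp
  next
    fix x assume "x \<in> U"
    then obtain T c where T: "finite T" "T \<subseteq> B" "\<forall>v\<in>T. c v \<in> K" "x = (\<Sum>v\<in>T. c v *s v)"
      using B(5) unfolding span_over_def by blast
    define c' where "c' v = (if v \<in> B then (if v \<in> T then c v else 0) else undefined)" for v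
    have "c' \<in> PiE B (\<lambda>_. K)" unfolding PiE_iff using T sf0[OF K] by (simp add: c'_def extensional_def)
    moreover have "f c' = x"
    proof -
      have "f c' = (\<Sum>v\<in>T. c' v *s v)"
        unfolding f_def using B(1) T(2) by (intro sum.mono_neutral_right) (simp_all add: c'_def)
      also have "\<dots> = x" using T(2,4) by (simp add: c'_def subset_iff)
      finally show ?thesis .
    qed
    ultimately show "\<exists>c\<in>PiE B (\<lambda>_. K). x = f c" by metis
  qed
  then have "card U = card (PiE B (\<lambda>_. K))" by (simp add: bij_betw_same_card)
  also have "\<dots> = card K ^ d" using B by (simp add: card_PiE)
  finally show ?thesis .
qed


lemma dot_sum_right: "dot a (sum f T) = (\<Sum>v\<in>T. dot a (f v))"
  by (induct T rule: infinite_finite_induct) (simp_all add: dot_add_right)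

lemma step2:
  fixes U :: "('a::{field,finite} ^ 'n) set"
  assumes K: "is_subfield K" and cK: "card K = q" and q2: "q \<ge> 2" and cL: "CARD('a) = q^3"
    and S: "subspace_over K U" and cU: "card U \<le> q^7" and cut: "cutting U"
    and a0: "a \<noteq> 0" and bnot: "\<forall>c. b \<noteq> c *s a"
    and MU: "M \<subseteq> U" and Mab: "\<forall>m\<in>M. dot a m = 0 \<and> dot b m = 0" and cM: "card M \<ge> q^4"
  shows False
proof -
  have ct0: "a + t *s b \<noteq> 0" for t
  proof
    assume h: "a + t *s b = 0"
    then have hi: "a $ i + t * b $ i = 0" for i by (metis vector_add_component vector_smult_component zero_index)
    show False
    proof (cases "t = 0")
      case True then show False using h a0 by simp
    next
      case False
      have "b = (- inverse t) *s a" unfolding vec_eq_iff vector_smult_component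
      proof
        fix i
        have "t * b $ i = - a $ i" using hi[of i] by (simp add: add_eq_0_iff)
        then have "inverse t * (t * b $ i) = - inverse t * a $ i" by simp
        then show "b $ i = - inverse t * a $ i" using False by (simp add: mult.assoc[symmetric])
      qed
      then show False using bnot by blast
    qed
  qed
  have ex: "\<exists>x. x \<in> U \<and> dot (a + t *s b) x = 0 \<and> dot b x \<noteq> 0" for t
  proof (rule ccontr)
    assume "\<not> ?thesis"
    then have h: "\<And>x. x \<in> U \<Longrightarrow> dot (a + t *s b) x = 0 \<Longrightarrow> dot b x = 0" by blast
    have hz: "dot b z = 0" if "dot (a + t *s b) z = 0" for z
    proof -
      have "z \<in> span_over UNIV (hyperplane (a + t *s b) \<inter> U)"
        using cut ct0[of t] that unfolding cutting_def hyperplane_dot by blast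
      then obtain T c where T: "T \<subseteq> hyperplane (a + t *s b) \<inter> U" "z = (\<Sum>v\<in>T. c v *s v)"
        unfolding span_over_def by blast
      have "dot b z = (\<Sum>v\<in>T. c v * dot b v)" using T(2) by (simp add: dot_sum_right dot_smult_right)
      also have "\<dots> = 0" using T(1) h by (intro sum.neutral) (auto simp: hyperplane_dot)
      finally show ?thesis .
    qed
    obtain \<mu> where mu: "b = \<mu> *s (a + t *s b)" using prop_lemma[OF ct0[of t] hz] by blast
    then have mi: "b $ i = \<mu> * (a $ i + t * b $ i)" for i
      by (metis vector_add_component vector_smult_component)
    show False
    proof (cases "\<mu> = 0")
      case True
      then have "b = 0 *s a" using mi by (simp add: vec_eq_iff)
      then show False using bnot by blast
    next
      case mu0: False
      show False
      proof (cases "1 - \<mu> * t = 0")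
        case True
        have "a $ i = 0" for i
        proof -
          have e1: "\<mu> * (t * b $ i) = b $ i" using True by (simp add: mult.assoc[symmetric])
          have "b $ i = \<mu> * a $ i + b $ i" using mi[of i] unfolding distrib_left e1 .
          then have "\<mu> * a $ i = 0" by simp
          then show ?thesis using mu0 by simp
        qed
        then have "a = 0" by (simp add: vec_eq_iff)
        then show False using a0 by simp
      next
        case False
        have "b $ i = (\<mu> / (1 - \<mu> * t)) * a $ i" for i
          using mi[of i] False by (simp add: field_simps)
        then have "b = (\<mu> / (1 - \<mu> * t)) *s a" by (simp add: vec_eq_iff)
        then show False using bnot by blast
      qed
    qed
  qed
  then obtain xf where xf: "\<And>t. xf t \<in> U" "\<And>t. dot (a + t *s b) (xf t) = 0" "\<And>t. dot b (xf t) \<noteq> 0"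
    by metis
  have xa: "dot a (xf t) = - t * dot b (xf t)" for t
    using xf(2)[of t] by (simp add: dot_add_left dot_smult_left eq_neg_iff_add_eq_0)
  define D where "D = M \<times> (K - {0}) \<times> (UNIV :: 'a set)"
  define g where "g = (\<lambda>(m, k, t). m + k *s xf t)"
  have inj: "inj_on g D"
  proof (rule inj_onI)
    fix p p' assume p: "p \<in> D" and p': "p' \<in> D" and e: "g p = g p'"
    obtain m k t where pe: "p = (m, k, t)" by (cases p) auto
    obtain m' k' t' where pe': "p' = (m', k', t')" by (cases p') auto
    have m: "m \<in> M" "k \<in> K" "k \<noteq> 0" using p pe D_def by auto
    have m': "m' \<in> M" "k' \<in> K" "k' \<noteq> 0" using p' pe' D_def by auto
    have e2: "m + k *s xf t = m' + k' *s xf t'" using e pe pe' g_def by simp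
    have "dot (a + t *s b) (m + k *s xf t) = 0"
      using xf(2)[of t] Mab m(1) by (simp add: dot_add_right dot_smult_right dot_add_left dot_smult_left)
    moreover have "dot (a + t *s b) (m' + k' *s xf t') = k' * ((t - t') * dot b (xf t'))"
      using xa[of t'] Mab m'(1) by (simp add: dot_add_right dot_smult_right dot_add_left dot_smult_left algebra_simps)
    ultimately have "k' * ((t - t') * dot b (xf t')) = 0" using e2 by simp
    then have tt: "t = t'" using m'(3) xf(3)[of t'] by simp
    have "dot b (m + k *s xf t) = dot b (m' + k' *s xf t')" using e2 by simp
    then have "k * dot b (xf t) = k' * dot b (xf t)"
      using Mab m(1) m'(1) tt by (simp add: dot_add_right dot_smult_right)
    then have kk: "k = k'" using xf(3)[of t] by simp
    then have "m = m'" using e2 tt by simp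
    then show "p = p'" using pe pe' tt kk by simp
  qed
  have img: "g ` D \<subseteq> U - M"
  proof
    fix y assume "y \<in> g ` D"
    then obtain m k t where mk: "m \<in> M" "k \<in> K" "k \<noteq> 0" and y: "y = m + k *s xf t"
      unfolding D_def g_def by auto
    have "y \<in> U" using y mk MU ssadd[OF K S] sssc[OF K S] xf(1) by blast
    moreover have "dot b y \<noteq> 0" using y mk Mab xf(3)[of t] by (simp add: dot_add_right dot_smult_right)
    ultimately show "y \<in> U - M" using Mab by auto
  qed
  have cD: "card D = card M * (q - 1) * q^3"
    unfolding D_def using cK cL sf0[OF K] by (simp add: card_cartesian_product card_Diff_singleton)
  have "card M + card (g ` D) \<le> card U"
  proof -
    have "card (M \<union> g ` D) = card M + card (g ` D)" using img by (intro card_Un_disjoint) auto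
    moreover have "card (M \<union> g ` D) \<le> card U" using img MU by (intro card_mono) auto
    ultimately show ?thesis by simp
  qed
  then have le: "card M + card M * (q - 1) * q^3 \<le> q^7" using card_image[OF inj] cD cU by simp
  have "q^4 * (q - 1) * q^3 \<le> card M * (q - 1) * q^3" using cM by (intro mult_right_mono) auto
  moreover have "q^4 * (q - 1) * q^3 = q^7 * (q - 1)" by (simp add: power_add[symmetric] mult.commute mult.left_commute)
  moreover have "q^7 * 1 \<le> q^7 * (q - 1)" using q2 by (intro mult_left_mono) auto
  moreover have "card M > 0"
  proof -
    have "0 < q^4" using q2 by simp
    then show ?thesis using cM by linarith
  qed
  ultimately show False using le by linarith
qed


lemma lin2:
  fixes u x :: "'a::field ^ 'n"
  assumes u0: "u \<noteq> 0" and xn: "x \<notin> range (\<lambda>c. c *s u)"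
    and e: "A *s u + B *s x = A' *s u + B' *s x"
  shows "A = A' \<and> B = B'"
proof -
  have ei: "A * u $ i + B * x $ i = A' * u $ i + B' * x $ i" for i
    using e by (metis vector_add_component vector_smult_component)
  have BB: "B = B'"
  proof (rule ccontr)
    assume nB: "B \<noteq> B'"
    have "x $ i = ((A' - A) / (B - B')) * u $ i" for i
    proof -
      have "(B - B') * x $ i = (A' - A) * u $ i" using ei[of i] by (simp add: algebra_simps)
      then show ?thesis using nB by (simp add: field_simps)
    qed
    then have "x = ((A' - A) / (B - B')) *s u" by (simp add: vec_eq_iff)
    then show False using xn by blast
  qed
  have "(A - A') * u $ i = 0" for i using ei[of i] BB by (simp add: algebra_simps)
  then have "(A - A') *s u = 0" unfolding vec_eq_iff vector_smult_component zero_index by blast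
  then have "A - A' = 0 \<or> u = 0" by (simp only: vector_mul_eq_0)
  then have "A - A' = 0" using u0 by blast
  then have "A = A'" by simp
  then show ?thesis using BB by simp
qed

lemma lin1:
  fixes u :: "'a::field ^ 'n"
  assumes "u \<noteq> 0" "A *s u = A' *s u" shows "A = A'"
proof -
  have "(A - A') *s u = 0" using assms(2) by (simp add: vector_sub_rdistrib)
  then have "A - A' = 0 \<or> u = 0" by (simp only: vector_mul_eq_0)
  then have "A - A' = 0" using assms(1) by blast
  then show ?thesis by simp
qed

lemma step1:
  fixes U :: "('a::{field,finite} ^ 'n) set"
  assumes K: "is_subfield K" and cK: "card K = q" and q2: "q \<ge> 2" and cL: "CARD('a) = q^3"
    and cV: "CARD('a ^ 'n) = q^12"
    and S: "subspace_over K U" and cU: "card U = q^7"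
  shows "\<exists>u x M. M \<subseteq> U \<and> card M \<ge> q^4 \<and> (\<forall>m\<in>M. \<exists>c d. m = c *s u + d *s x)"
proof -
  have fK: "finite K" using cK q2 card.infinite by fastforce
  have qpos: "q > 0" using q2 by simp
  have "q^1 < q^3" using q2 by (subst power_strict_increasing_iff) auto
  then have "card K < CARD('a)" using cK cL by simp
  then have "K \<noteq> UNIV" by auto
  then obtain l where lK: "l \<notin> K" by blast
  have lam: "\<alpha> = 0 \<and> \<beta> = 0" if "\<alpha> \<in> K" "\<beta> \<in> K" "\<alpha> + \<beta> * l = 0" for \<alpha> \<beta>
  proof -
    have "\<beta> = 0"
    proof (rule ccontr)
      assume "\<beta> \<noteq> 0"
      then have "l = - \<alpha> / \<beta>" using that(3) by (simp add: field_simps eq_neg_iff_add_eq_0 add.commute)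
      then show False using lK sfdiv[OF K sfneg[OF K that(1)] that(2)] by simp
    qed
    then show ?thesis using that by simp
  qed
  define h where "h = (\<lambda>(x::'a^'n, y::'a^'n). x - l *s y)"
  have "\<not> inj_on h (U \<times> U)"
  proof
    assume "inj_on h (U \<times> U)"
    then have "card (U \<times> U) \<le> card (UNIV :: ('a^'n) set)" by (intro card_inj_on_le) auto
    then have "q^7 * q^7 \<le> q^12" using cU cV by (simp add: card_cartesian_product)
    moreover have "q^12 < q^7 * q^7" using q2 by (simp add: power_add[symmetric] power_strict_increasing_iff)
    ultimately show False by simp
  qed
  then obtain x y x' y' where xy: "x \<in> U" "y \<in> U" "x' \<in> U" "y' \<in> U" "(x, y) \<noteq> (x', y')"
    "x - l *s y = x' - l *s y'"
    unfolding inj_on_def h_def by auto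
  define u where "u = y - y'"
  have uU: "u \<in> U" using xy ssdiff[OF K S] u_def by simp
  have luU: "l *s u \<in> U"
  proof -
    have "l *s u = x - x'" using xy(6) unfolding u_def vector_ssub_ldistrib by (simp add: algebra_simps)
    then show ?thesis using xy ssdiff[OF K S] by simp
  qed
  have u0: "u \<noteq> 0"
  proof
    assume "u = 0" then have "y = y'" using u_def by simp
    then show False using xy(5,6) by simp
  qed
  define Lu where "Lu = range (\<lambda>c. c *s u)"
  have injLu: "inj (\<lambda>c. c *s u)" using lin1[OF u0] by (intro injI) auto
  have cLu: "card Lu = q^3" unfolding Lu_def using card_image[OF injLu] cL by simp
  show ?thesis
  proof (cases "Lu \<subseteq> U")
    case True
    have "card Lu < card U" using cLu cU q2 by (simp add: power_strict_increasing_iff)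
    have "\<not> U \<subseteq> Lu"
    proof
      assume "U \<subseteq> Lu" then have "card U \<le> card Lu" by (intro card_mono) auto
      then show False using \<open>card Lu < card U\<close> by simp
    qed
    then obtain x where xU: "x \<in> U" and xn: "x \<notin> Lu" by blast
    define M where "M = (\<lambda>(c, k). c *s u + k *s x) ` (UNIV \<times> K)"
    have inj: "inj_on (\<lambda>(c, k). c *s u + k *s x) (UNIV \<times> K)"
      using lin2[OF u0 xn[unfolded Lu_def]] by (intro inj_onI) auto
    have "card M = q^3 * q" unfolding M_def using card_image[OF inj] cL cK
      by (simp add: card_cartesian_product)
    moreover have "M \<subseteq> U"
    proof
      fix m assume "m \<in> M"
      then obtain c k where "k \<in> K" "m = c *s u + k *s x" unfolding M_def by auto
      moreover have "c *s u \<in> U" using True unfolding Lu_def by auto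
      ultimately show "m \<in> U" using ssadd[OF K S] sssc[OF K S] xU by blast
    qed
    moreover have "\<forall>m\<in>M. \<exists>c d. m = c *s u + d *s x" unfolding M_def by auto
    moreover have "q^3 * q = q^4" by (simp add: eval_nat_numeral)
    ultimately have "M \<subseteq> U \<and> q^4 \<le> card M \<and> (\<forall>m\<in>M. \<exists>c d. m = c *s u + d *s x)" by simp
    then show ?thesis by blast
  next
    case False
    have inKl: "\<exists>\<alpha>\<in>K. \<exists>\<beta>\<in>K. c = \<alpha> + \<beta> * l" if cU': "c *s u \<in> U" for c
    proof (rule ccontr)
      assume nc: "\<not> ?thesis"
      define s where "s = (\<lambda>(\<alpha>, \<beta>, \<gamma>). \<alpha> + \<beta> * l + \<gamma> * c)"
      have injs: "inj_on s (K \<times> K \<times> K)"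
      proof (rule inj_onI)
        fix p p' assume p: "p \<in> K \<times> K \<times> K" and p': "p' \<in> K \<times> K \<times> K" and e: "s p = s p'"
        obtain a1 b1 g1 where pe: "p = (a1, b1, g1)" by (cases p) auto
        obtain a2 b2 g2 where pe': "p' = (a2, b2, g2)" by (cases p') auto
        have k: "a1 \<in> K" "b1 \<in> K" "g1 \<in> K" "a2 \<in> K" "b2 \<in> K" "g2 \<in> K" using p p' pe pe' by auto
        have e2: "(a1 - a2) + (b1 - b2) * l + (g1 - g2) * c = 0" using e pe pe' s_def by (simp add: algebra_simps)
        have gg: "g1 = g2"
        proof (rule ccontr)
          assume ng: "g1 \<noteq> g2"
          have G0: "g1 - g2 \<noteq> 0" using ng by simp
          have Gc: "c * (g1 - g2) = - ((a1 - a2) + (b1 - b2) * l)"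
          proof -
            have "((a1 - a2) + (b1 - b2) * l) + c * (g1 - g2) = 0" using e2 by (simp only: mult.commute)
            then show ?thesis by (simp only: add_eq_0_iff)
          qed
          define I where "I = inverse (g1 - g2)"
          have ri: "(g1 - g2) * inverse (g1 - g2) = 1" using G0 by (rule right_inverse)
          have "c = c * ((g1 - g2) * I)" unfolding I_def ri by (rule mult_1_right[symmetric])
          also have "\<dots> = (c * (g1 - g2)) * I" by (rule mult.assoc[symmetric])
          also have "\<dots> = (- ((a1 - a2) + (b1 - b2) * l)) * I" unfolding Gc ..
          also have "\<dots> = (- (a1 - a2) * I) + (- (b1 - b2) * I) * l"
            by (simp add: algebra_simps)
          finally have "c = (- (a1 - a2) * I) + (- (b1 - b2) * I) * l" .
          then have "c = (- (a1 - a2) * inverse (g1 - g2)) + (- (b1 - b2) * inverse (g1 - g2)) * l"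
            unfolding I_def .
          moreover have "- (a1 - a2) * inverse (g1 - g2) \<in> K" "- (b1 - b2) * inverse (g1 - g2) \<in> K"
            using k by (simp_all add: sfmult[OF K] sfinv[OF K] sfneg[OF K] sfdiff[OF K])
          ultimately show False using nc by blast
        qed
        then have "(a1 - a2) + (b1 - b2) * l = 0" using e2 by simp
        then have "a1 - a2 = 0 \<and> b1 - b2 = 0"
          by (rule lam[OF sfdiff[OF K k(1) k(4)] sfdiff[OF K k(2) k(5)]])
        then show "p = p'" using pe pe' gg by simp
      qed
      have "card (s ` (K \<times> K \<times> K)) = CARD('a)" using card_image[OF injs] cK cL
        by (simp add: card_cartesian_product power3_eq_cube)
      then have sU: "s ` (K \<times> K \<times> K) = UNIV" by (simp add: card_eq_UNIV_imp_eq_UNIV)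
      have "Lu \<subseteq> U"
      proof
        fix z assume "z \<in> Lu"
        then obtain e where z: "z = e *s u" unfolding Lu_def by auto
        have "e \<in> s ` (K \<times> K \<times> K)" using sU by simp
        then obtain a1 b1 g1 where k: "a1 \<in> K" "b1 \<in> K" "g1 \<in> K" and ee: "e = a1 + b1 * l + g1 * c"
          unfolding s_def by auto
        have "z = a1 *s u + b1 *s (l *s u) + g1 *s (c *s u)"
          unfolding z ee by (simp add: vec_eq_iff algebra_simps)
        then show "z \<in> U" using k uU luU cU' ssadd[OF K S] sssc[OF K S] by metis
      qed
      then show False using False by simp
    qed
    have cULu: "card (U \<inter> Lu) \<le> q^2"
    proof -
      have "U \<inter> Lu \<subseteq> (\<lambda>(\<alpha>, \<beta>). (\<alpha> + \<beta> * l) *s u) ` (K \<times> K)"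
      proof
        fix z assume "z \<in> U \<inter> Lu"
        then obtain c where z: "z = c *s u" "c *s u \<in> U" unfolding Lu_def by auto
        then obtain \<alpha> \<beta> where "\<alpha> \<in> K" "\<beta> \<in> K" "c = \<alpha> + \<beta> * l" using inKl by blast
        then show "z \<in> (\<lambda>(\<alpha>, \<beta>). (\<alpha> + \<beta> * l) *s u) ` (K \<times> K)" using z by auto
      qed
      then have "card (U \<inter> Lu) \<le> card ((\<lambda>(\<alpha>, \<beta>). (\<alpha> + \<beta> * l) *s u) ` (K \<times> K))"
        by (intro card_mono) auto
      also have "\<dots> \<le> card (K \<times> K)" using fK by (intro card_image_le) auto
      finally show ?thesis using cK by (simp add: card_cartesian_product power2_eq_square)
    qed
    define G where "G = U \<times> U \<times> Lu"
    define Z where "Z = {(x::'a^'n, y::'a^'n, p::'a^'n). x \<in> U \<and> y \<in> U \<and> p \<in> Lu \<and> l *s x = y + p}"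
    define \<phi> where "\<phi> = (\<lambda>(x::'a^'n, y::'a^'n, p::'a^'n). l *s x - y - p)"
    define d where "d = (\<lambda>(x::'a^'n, y::'a^'n, p::'a^'n) (x', y', p'). (x - x', y - y', p - p'))"
    have LuD: "p - p' \<in> Lu" if P: "p \<in> Lu" "p' \<in> Lu" for p p'
    proof -
      obtain c c' where "p = c *s u" "p' = c' *s u" using P unfolding Lu_def by blast
      then have "p - p' = (c - c') *s u" by (simp add: vector_sub_rdistrib)
      then show ?thesis unfolding Lu_def by blast
    qed
    have "card G \<le> card (UNIV :: ('a^'n) set) * card Z"
    proof (rule fib[where \<phi> = \<phi> and d = d])
      show "finite G" "finite (UNIV :: ('a^'n) set)" "\<phi> ` G \<subseteq> UNIV" "finite Z" by auto
    next
      fix g g' assume g: "g \<in> G" "g' \<in> G" "\<phi> g = \<phi> g'"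
      obtain x y p where ge: "g = (x, y, p)" by (cases g) auto
      obtain x' y' p' where ge': "g' = (x', y', p')" by (cases g') auto
      have "l *s x - y - p = l *s x' - y' - p'" using g(3) ge ge' \<phi>_def by simp
      then have "l *s (x - x') = (y - y') + (p - p')"
        unfolding vector_ssub_ldistrib by (simp add: algebra_simps)
      then show "d g g' \<in> Z" using g(1,2) ge ge' unfolding d_def Z_def G_def
        using ssdiff[OF K S] LuD by auto
    next
      fix g g' s assume "d g s = d g' s"
      then show "g = g'" unfolding d_def by (auto split: prod.splits)
    qed
    then have "q^7 * (q^7 * q^3) \<le> q^12 * card Z" using cU cLu cV G_def by (simp add: card_cartesian_product)
    then have cZ: "q^5 * q^12 \<le> card Z * q^12" by (simp add: power_add[symmetric] mult.commute)
    have "\<exists>z\<in>Z. fst z \<notin> Lu"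
    proof (rule ccontr)
      assume "\<not> ?thesis"
      then have "Z \<subseteq> (\<lambda>(x, y). (x, y, l *s x - y)) ` ((U \<inter> Lu) \<times> (U \<inter> Lu))"
      proof -
        assume H: "\<not> (\<exists>z\<in>Z. fst z \<notin> Lu)"
        show ?thesis
        proof
          fix z assume z: "z \<in> Z"
          obtain x y p where ze: "z = (x, y, p)" by (cases z) auto
          have xyp: "x \<in> U" "y \<in> U" "p \<in> Lu" "l *s x = y + p" using z ze Z_def by auto
          have xL: "x \<in> Lu" using H z ze by force
          have lxL: "l *s x \<in> Lu" using xL unfolding Lu_def by (auto simp: vector_smult_assoc)
          have py: "p = l *s x - y" "y = l *s x - p" using xyp(4) by (simp_all add: algebra_simps)
          have yL: "y \<in> Lu" unfolding py(2) by (rule LuD[OF lxL xyp(3)])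
          have "z = (\<lambda>(x, y). (x, y, l *s x - y)) (x, y)" unfolding ze py(1) by simp
          moreover have "(x, y) \<in> (U \<inter> Lu) \<times> (U \<inter> Lu)" using xyp(1,2) xL yL by simp
          ultimately show "z \<in> (\<lambda>(x, y). (x, y, l *s x - y)) ` ((U \<inter> Lu) \<times> (U \<inter> Lu))"
            by (rule image_eqI)
        qed
      qed
      then have "card Z \<le> card ((\<lambda>(x, y). (x, y, l *s x - y)) ` ((U \<inter> Lu) \<times> (U \<inter> Lu)))"
        by (intro card_mono) auto
      also have "\<dots> \<le> card ((U \<inter> Lu) \<times> (U \<inter> Lu))" by (intro card_image_le) auto
      finally have "card Z \<le> card ((U \<inter> Lu) \<times> (U \<inter> Lu))" .
      also have "\<dots> \<le> q^2 * q^2" unfolding card_cartesian_product using cULu cULu by (rule mult_le_mono)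
      also have "\<dots> = q^4" by (simp add: power_add[symmetric])
      finally have "card Z \<le> q^4" .
      then have "card Z * q^12 \<le> q^4 * q^12" by (rule mult_right_mono) simp
      moreover have "q^4 * q^12 < q^5 * q^12" using q2
        by (intro mult_strict_right_mono) (simp_all add: power_strict_increasing_iff)
      ultimately show False using cZ by linarith
    qed
    then obtain x y p where xyp: "x \<in> U" "y \<in> U" "p \<in> Lu" "l *s x = y + p" and xn: "x \<notin> Lu"
      unfolding Z_def by auto
    obtain \<pi> where pe: "p = \<pi> *s u" using xyp(3) Lu_def by auto
    define F where "F = (\<lambda>(\<alpha>, \<beta>, \<gamma>, \<delta>). (\<alpha> + \<beta> * l - \<delta> * \<pi>) *s u + (\<gamma> + \<delta> * l) *s x)"
    define M where "M = F ` (K \<times> K \<times> K \<times> K)"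
    have Feq: "F (\<alpha>, \<beta>, \<gamma>, \<delta>) = \<alpha> *s u + \<beta> *s (l *s u) + \<gamma> *s x + \<delta> *s y" for \<alpha> \<beta> \<gamma> \<delta>
    proof -
      have yy: "y = l *s x - \<pi> *s u" using xyp(4) pe by (simp add: algebra_simps)
      show ?thesis unfolding F_def yy by (simp add: vec_eq_iff algebra_simps)
    qed
    have injF: "inj_on F (K \<times> K \<times> K \<times> K)"
    proof (rule inj_onI)
      fix r r' assume r: "r \<in> K \<times> K \<times> K \<times> K" and r': "r' \<in> K \<times> K \<times> K \<times> K" and e: "F r = F r'"
      obtain a1 b1 g1 d1 where re: "r = (a1, b1, g1, d1)" by (cases r) auto
      obtain a2 b2 g2 d2 where re': "r' = (a2, b2, g2, d2)" by (cases r') auto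
      have k: "a1 \<in> K" "b1 \<in> K" "g1 \<in> K" "d1 \<in> K" "a2 \<in> K" "b2 \<in> K" "g2 \<in> K" "d2 \<in> K"
        using r r' re re' by auto
      have "a1 + b1 * l - d1 * \<pi> = a2 + b2 * l - d2 * \<pi> \<and> g1 + d1 * l = g2 + d2 * l"
      proof -
        have "(a1 + b1 * l - d1 * \<pi>) *s u + (g1 + d1 * l) *s x = (a2 + b2 * l - d2 * \<pi>) *s u + (g2 + d2 * l) *s x"
          using e unfolding re re' F_def by (simp only: prod.case)
        then show ?thesis by (rule lin2[OF u0 xn[unfolded Lu_def]])
      qed
      then have e1: "a1 + b1 * l - d1 * \<pi> = a2 + b2 * l - d2 * \<pi>" and e2: "(g1 - g2) + (d1 - d2) * l = 0"
        by (auto simp: algebra_simps)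
      have gd: "g1 - g2 = 0 \<and> d1 - d2 = 0"
        by (rule lam[OF sfdiff[OF K k(3) k(7)] sfdiff[OF K k(4) k(8)] e2])
      then have "(a1 - a2) + (b1 - b2) * l = 0" using e1 by (simp add: algebra_simps)
      then have "a1 - a2 = 0 \<and> b1 - b2 = 0"
        by (rule lam[OF sfdiff[OF K k(1) k(5)] sfdiff[OF K k(2) k(6)]])
      then show "r = r'" using re re' gd by simp
    qed
    have "card M = q^4" unfolding M_def using card_image[OF injF] cK
      by (simp add: card_cartesian_product power4_eq_xxxx)
    moreover have "M \<subseteq> U"
    proof
      fix m assume "m \<in> M"
      then obtain a1 b1 g1 d1 where k: "a1 \<in> K" "b1 \<in> K" "g1 \<in> K" "d1 \<in> K" and m: "m = F (a1, b1, g1, d1)"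
        unfolding M_def by auto
      show "m \<in> U" unfolding m Feq using k uU luU xyp(1,2) ssadd[OF K S] sssc[OF K S] by metis
    qed
    moreover have "\<forall>m\<in>M. \<exists>c d. m = c *s u + d *s x"
    proof
      fix m assume "m \<in> M"
      then obtain a1 b1 g1 d1 where m: "m = F (a1, b1, g1, d1)" unfolding M_def by auto
      show "\<exists>c d. m = c *s u + d *s x" unfolding m F_def prod.case by (rule exI, rule exI, rule refl)
    qed
    ultimately have "M \<subseteq> U \<and> q^4 \<le> card M \<and> (\<forall>m\<in>M. \<exists>c d. m = c *s u + d *s x)" by simp
    then show ?thesis by blast
  qed
qed


theorem corollary3p12:
  fixes K :: "'a::{field,finite} set" and q :: nat
  assumes "\<exists>p k. prime p \<and> k > 0 \<and> q = p ^ k"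
    and "is_subfield K" and "card K = q" and "CARD('a) = q ^ 3"
  shows "\<not> (\<exists>U :: ('a ^ 4) set. is_system K U 7 \<and> cutting U)"
proof
  assume "\<exists>U :: ('a ^ 4) set. is_system K U 7 \<and> cutting U"
  then obtain U :: "('a ^ 4) set" where sys: "is_system K U 7" and cut: "cutting U" by blast
  note K = assms(2) and cK = assms(3) and cL = assms(4)
  obtain p k where pk: "prime p" "k > 0" "q = p ^ k" using assms(1) by blast
  have q2: "q \<ge> 2"
  proof -
    have "p \<ge> 2" using pk(1) by (simp add: prime_ge_2_nat)
    moreover have "p \<le> p ^ k" using pk(2) \<open>p \<ge> 2\<close> by (simp add: self_le_power)
    ultimately show ?thesis using pk(3) by simp
  qed
  have SD: "subspace_dim_over K U 7" using sys unfolding is_system_def by simp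
  then have S: "subspace_over K U" unfolding subspace_dim_over_def by simp
  have cU: "card U = q^7" using card_subspace_dim[OF K SD] cK by simp
  have cV: "CARD('a ^ 4) = q^12" using cL by (simp add: power_mult[symmetric])
  obtain u x M where M: "M \<subseteq> U" "card M \<ge> q^4" "\<forall>m\<in>M. \<exists>c d. m = c *s u + d *s x"
    using step1[OF K cK q2 cL cV S cU] by blast
  define N where "N = {v :: 'a^4. dot v u = 0 \<and> dot v x = 0}"
  have "card (UNIV :: ('a^4) set) \<le> card (UNIV :: ('a \<times> 'a) set) * card N"
  proof (rule fib[where \<phi> = "\<lambda>v. (dot v u, dot v x)" and d = "\<lambda>v w. v - w"])
    show "finite (UNIV :: ('a^4) set)" "finite (UNIV :: ('a \<times> 'a) set)" "finite N"
      "(\<lambda>v. (dot v u, dot v x)) ` UNIV \<subseteq> UNIV" by auto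
  next
    fix v w :: "'a^4" assume "(dot v u, dot v x) = (dot w u, dot w x)"
    then show "v - w \<in> N" unfolding N_def by (simp add: dot_diff_left)
  next
    fix v w s :: "'a^4" assume "v - s = w - s" then show "v = w" by simp
  qed
  then have F6: "q^6 * q^6 \<le> q^6 * card N" using cV cL
    by (simp add: card_cartesian_product power_add[symmetric] power_mult[symmetric])
  have qp6: "0 < q^6" using q2 by simp
  have cN: "q^6 \<le> card N" using mult_le_cancel1[of "q^6" "q^6" "card N"] F6 qp6 by blast
  have "1 < q^6" using q2 by (intro one_less_power) auto
  then have "\<not> N \<subseteq> {0}"
  proof (intro notI)
    assume "N \<subseteq> {0}"
    then have "card N \<le> card {0::'a^4}" by (intro card_mono) auto
    then show False using cN \<open>1 < q^6\<close> by simp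
  qed
  then obtain a where aN: "a \<in> N" and a0: "a \<noteq> 0" by blast
  have "card (range (\<lambda>c. c *s a)) \<le> q^3" using card_image_le[of UNIV "\<lambda>c. c *s a"] cL by simp
  moreover have "q^3 < q^6" using q2 by (simp add: power_strict_increasing_iff)
  ultimately have "\<not> N \<subseteq> range (\<lambda>c. c *s a)"
  proof (intro notI)
    assume "N \<subseteq> range (\<lambda>c. c *s a)"
    then have "card N \<le> card (range (\<lambda>c. c *s a))" by (intro card_mono) auto
    then show False using cN \<open>q^3 < q^6\<close> \<open>card (range (\<lambda>c. c *s a)) \<le> q^3\<close> by linarith
  qed
  then obtain b where bN: "b \<in> N" and bnot: "\<forall>c. b \<noteq> c *s a" by blast
  have Mab: "\<forall>m\<in>M. dot a m = 0 \<and> dot b m = 0"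
  proof
    fix m assume "m \<in> M"
    then obtain c d where m: "m = c *s u + d *s x" using M(3) by blast
    show "dot a m = 0 \<and> dot b m = 0" using aN bN unfolding m N_def
      by (simp add: dot_add_right dot_smult_right)
  qed
  show False using step2[OF K cK q2 cL S _ cut a0 bnot M(1) Mab M(2)] cU by simp
qed

end
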